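(* Let $(X,d^X)$ and $(Y,d^Y)$ be compact metric spaces, let $f$ be a homeomorphism of $X$, let $g$ be a homeomorphism of $Y$, and let $h:X\to Y$ be a homeomorphism. Then: (1) $U_f(X)=U_{f^{-1}}(X)$; (2) $U_{h\circ f\circ h^{-1}}(Y)=h(U_f(X))$; (3) for each $k\in\mathbb{Z}$, the set $U_{f^k}(X)$ is invariant under $f$; in particular $U_f(X)$ is invariant under $f$; (4) $U_{f\times g}(X\times Y)=U_f(X)\times U_g(Y)$, where $X\times Y$ carries the maximum metric $D((x_1,y_1),(x_2,y_2))=\max\{d^X(x_1,x_2),d^Y(y_1,y_2)\}$; (5) $M_f(X)=M_{f^{-1}}(X)$; (6) $M_{h\circ f\circ h^{-1}}(Y)=h(M_f(X))$; (7) for each $k\in\mathbb{Z}$, the set $M_{f^k}(X)$ is invariant under $f$; in particular $M_f(X)$ is invariant under $f$.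
   Context: For a homeomorphism $f$ of a compact metric space $(X,d)$: $B(x,\epsilon)=\{y: d(x,y)<\epsilon\}$ and $\mathcal{O}_f(x)=\{f^n(x):n\in\mathbb{Z}\}$. $f$ is expansive on a subset $A\subset X$ with expansivity constant $\mathfrak{c}>0$ if for every pair of distinct $x,y\in A$ there is $n\in\mathbb{Z}$ with $d(f^n(x),f^n(y))>\mathfrak{c}$. A point $x$ is a uniformly expansive point of $f$ if there is $\mathfrak{c}>0$ such that $f$ is expansive on $B(x,\mathfrak{c})$ with expansivity constant $\mathfrak{c}$; $U_f(X)$ denotes the set of uniformly expansive points of $f$. A point $x$ is a minimally expansive point of $f$ if there is $\mathfrak{c}>0$ such that for each $y\in B(x,\mathfrak{c})$, $f$ is expansive on $\overline{\mathcal{O}_f(y)}$ with expansivity constant $\mathfrak{c}$; $M_f(X)$ denotes the set of minimally expansive points of $f$. *)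

theory Defs
  imports "HOL-Analysis.Analysis"
begin

definition compact_metric_space :: "'a set \<Rightarrow> ('a \<Rightarrow> 'a \<Rightarrow> real) \<Rightarrow> bool" where
  "compact_metric_space X d \<longleftrightarrow> Metric_space X d \<and> compact_space (Metric_space.mtopology X d)"

definition mhomeo :: "'a set \<Rightarrow> ('a \<Rightarrow> 'a \<Rightarrow> real) \<Rightarrow> 'b set \<Rightarrow> ('b \<Rightarrow> 'b \<Rightarrow> real) \<Rightarrow> ('a \<Rightarrow> 'b) \<Rightarrow> bool" where
  "mhomeo X d Y e h \<longleftrightarrow> homeomorphic_map (Metric_space.mtopology X d) (Metric_space.mtopology Y e) h"

definition inv_on :: "'a set \<Rightarrow> ('a \<Rightarrow> 'b) \<Rightarrow> 'b \<Rightarrow> 'a" where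
  "inv_on X f = the_inv_into X f"

definition zpow :: "'a set \<Rightarrow> ('a \<Rightarrow> 'a) \<Rightarrow> int \<Rightarrow> 'a \<Rightarrow> 'a" where
  "zpow X f n = (if 0 \<le> n then f ^^ nat n else inv_on X f ^^ nat (- n))"

definition oball :: "'a set \<Rightarrow> ('a \<Rightarrow> 'a \<Rightarrow> real) \<Rightarrow> 'a \<Rightarrow> real \<Rightarrow> 'a set" where
  "oball X d x r = {y \<in> X. d x y < r}"

definition orbit :: "'a set \<Rightarrow> ('a \<Rightarrow> 'a) \<Rightarrow> 'a \<Rightarrow> 'a set" where
  "orbit X f x = {zpow X f n x | n. True}"

definition expansive_on :: "'a set \<Rightarrow> ('a \<Rightarrow> 'a \<Rightarrow> real) \<Rightarrow> ('a \<Rightarrow> 'a) \<Rightarrow> 'a set \<Rightarrow> real \<Rightarrow> bool" where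
  "expansive_on X d f A c \<longleftrightarrow>
     (\<forall>x\<in>A. \<forall>y\<in>A. x \<noteq> y \<longrightarrow> (\<exists>n::int. d (zpow X f n x) (zpow X f n y) > c))"

definition unif_exp_points :: "'a set \<Rightarrow> ('a \<Rightarrow> 'a \<Rightarrow> real) \<Rightarrow> ('a \<Rightarrow> 'a) \<Rightarrow> 'a set" where
  "unif_exp_points X d f = {x \<in> X. \<exists>c>0. expansive_on X d f (oball X d x c) c}"

definition min_exp_points :: "'a set \<Rightarrow> ('a \<Rightarrow> 'a \<Rightarrow> real) \<Rightarrow> ('a \<Rightarrow> 'a) \<Rightarrow> 'a set" where
  "min_exp_points X d f = {x \<in> X. \<exists>c>0. \<forall>y \<in> oball X d x c.
      expansive_on X d f (Metric_space.mtopology X d closure_of orbit X f y) c}"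

definition max_dist :: "('a \<Rightarrow> 'a \<Rightarrow> real) \<Rightarrow> ('b \<Rightarrow> 'b \<Rightarrow> real) \<Rightarrow> 'a \<times> 'b \<Rightarrow> 'a \<times> 'b \<Rightarrow> real" where
  "max_dist d e p q = max (d (fst p) (fst q)) (e (snd p) (snd q))"

end

theory Submission
  imports Defs
begin


lemma inv_on_props:
  assumes "bij_betw F X X" "x \<in> X"
  shows "inv_on X F x \<in> X" "F (inv_on X F x) = x" "inv_on X F (F x) = x"
  using assms unfolding inv_on_def bij_betw_def
  by (auto intro: the_inv_into_into f_the_inv_into_f the_inv_into_f_f)

lemma funpow_in: "(\<forall>x\<in>X. F x \<in> X) \<Longrightarrow> x \<in> X \<Longrightarrow> (F ^^ m) x \<in> X"
  by (induction m) auto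

lemma zpow_in:
  assumes "bij_betw F X X" "x \<in> X"
  shows "zpow X F n x \<in> X"
proof -
  have "\<forall>x\<in>X. F x \<in> X" using assms(1) by (auto simp: bij_betw_def)
  moreover have "\<forall>x\<in>X. inv_on X F x \<in> X" using inv_on_props(1)[OF assms(1)] by blast
  ultimately show ?thesis using assms(2) by (auto simp: zpow_def intro: funpow_in)
qed

lemma zpow_0[simp]: "zpow X F 0 = id" by (simp add: zpow_def)
lemma zpow_1[simp]: "zpow X F 1 = F" by (simp add: zpow_def)

lemma zpow_succ:
  assumes "bij_betw F X X" "x \<in> X"
  shows "zpow X F (n+1) x = F (zpow X F n x)"
proof (cases "0 \<le> n")
  case True
  then have "nat (n+1) = Suc (nat n)" by simp
  then show ?thesis using True by (simp add: zpow_def)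
next
  case False
  define m where "m = nat (-(n+1))"
  have nn: "nat (-n) = Suc m" using False by (simp add: m_def)
  have z: "(inv_on X F ^^ m) x \<in> X"
    using assms inv_on_props(1)[OF assms(1)] by (auto intro: funpow_in)
  have "zpow X F (n+1) x = (inv_on X F ^^ m) x"
    using False by (auto simp: zpow_def m_def)
  moreover have "zpow X F n x = inv_on X F ((inv_on X F ^^ m) x)"
    using False nn by (simp add: zpow_def)
  ultimately show ?thesis using inv_on_props(2)[OF assms(1) z] by simp
qed

lemma zpow_pred:
  assumes "bij_betw F X X" "x \<in> X"
  shows "zpow X F (n-1) x = inv_on X F (zpow X F n x)"
proof -
  have "zpow X F n x = F (zpow X F (n-1) x)"
    using zpow_succ[OF assms, of "n-1"] by simp
  then show ?thesis using inv_on_props(3)[OF assms(1) zpow_in[OF assms]] by simp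
qed

lemma zpow_add:
  assumes "bij_betw F X X" "x \<in> X"
  shows "zpow X F (m+n) x = zpow X F m (zpow X F n x)"
proof (induction m rule: int_induct[where k=0])
  case base then show ?case by simp
next
  case (step1 i)
  have "zpow X F (i + 1 + n) x = zpow X F ((i+n)+1) x" by (simp add: algebra_simps)
  also have "\<dots> = F (zpow X F (i+n) x)" using zpow_succ[OF assms] by simp
  also have "\<dots> = zpow X F (i+1) (zpow X F n x)"
    using step1 zpow_succ[OF assms(1) zpow_in[OF assms]] by simp
  finally show ?case .
next
  case (step2 i)
  have "zpow X F (i - 1 + n) x = zpow X F ((i+n)-1) x" by (simp add: algebra_simps)
  also have "\<dots> = inv_on X F (zpow X F (i+n) x)" using zpow_pred[OF assms] by simp
  also have "\<dots> = zpow X F (i-1) (zpow X F n x)"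
    using step2 zpow_pred[OF assms(1) zpow_in[OF assms]] by simp
  finally show ?case .
qed

lemma zpow_bij:
  assumes "bij_betw F X X"
  shows "bij_betw (zpow X F k) X X"
proof -
  have a: "zpow X F (-k) (zpow X F k x) = x" "zpow X F k (zpow X F (-k) x) = x" if "x \<in> X" for x
    using zpow_add[OF assms that, of "-k" k] zpow_add[OF assms that, of k "-k"] by simp_all
  show ?thesis unfolding bij_betw_def
  proof
    show "inj_on (zpow X F k) X" by (metis a(1) inj_onI)
    show "zpow X F k ` X = X"
    proof
      show "zpow X F k ` X \<subseteq> X" using zpow_in[OF assms] by blast
      show "X \<subseteq> zpow X F k ` X"
      proof
        fix x assume "x \<in> X"
        then show "x \<in> zpow X F k ` X" using a(2)[of x] zpow_in[OF assms] by (metis image_eqI)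
      qed
    qed
  qed
qed

lemma inv_on_eqI:
  assumes "bij_betw F X X" "w \<in> X" "F w = z"
  shows "inv_on X F z = w"
  using assms unfolding inv_on_def bij_betw_def by (auto intro: the_inv_into_f_eq)

lemma inv_on_zpow:
  assumes "bij_betw F X X" "x \<in> X"
  shows "inv_on X (zpow X F k) x = zpow X F (-k) x"
  by (rule inv_on_eqI[OF zpow_bij[OF assms(1)] zpow_in[OF assms]])
     (use zpow_add[OF assms, of k "-k"] in simp)

lemma zpow_cong:
  assumes "bij_betw F X X" "bij_betw G X X" "\<forall>x\<in>X. F x = G x" "x \<in> X"
  shows "zpow X F n x = zpow X G n x"
proof (induction n rule: int_induct[where k=0])
  case base then show ?case by simp
next
  case (step1 i) then show ?case
    using zpow_succ[OF assms(1,4)] zpow_succ[OF assms(2,4)] zpow_in[OF assms(2,4)] assms(3) by simp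
next
  case (step2 i)
  have z: "zpow X G i x \<in> X" using zpow_in[OF assms(2,4)] .
  have "inv_on X F (zpow X G i x) = inv_on X G (zpow X G i x)"
    by (rule inv_on_eqI[OF assms(1) inv_on_props(1)[OF assms(2) z]])
       (use assms(3) inv_on_props[OF assms(2) z] in simp)
  then show ?case
    using zpow_pred[OF assms(1,4)] zpow_pred[OF assms(2,4)] step2 by simp
qed

lemma zpow_mult:
  assumes "bij_betw F X X" "x \<in> X"
  shows "zpow X (zpow X F k) n x = zpow X F (k*n) x"
proof (induction n rule: int_induct[where k=0])
  case base then show ?case by simp
next
  case (step1 i)
  have "zpow X (zpow X F k) (i+1) x = zpow X F k (zpow X F (k*i) x)"
    using zpow_succ[OF zpow_bij[OF assms(1)] assms(2)] step1 by simp
  also have "\<dots> = zpow X F (k + k*i) x" by (rule zpow_add[OF assms, symmetric])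
  finally show ?case by (simp add: algebra_simps)
next
  case (step2 i)
  have "zpow X (zpow X F k) (i-1) x = inv_on X (zpow X F k) (zpow X F (k*i) x)"
    using zpow_pred[OF zpow_bij[OF assms(1)] assms(2)] step2 by simp
  also have "\<dots> = zpow X F (-k) (zpow X F (k*i) x)"
    using inv_on_zpow[OF assms(1) zpow_in[OF assms]] by simp
  also have "\<dots> = zpow X F (-k + k*i) x" by (rule zpow_add[OF assms, symmetric])
  finally show ?case by (simp add: algebra_simps)
qed

lemma bij_inv_on: "bij_betw F X X \<Longrightarrow> bij_betw (inv_on X F) X X"
  unfolding inv_on_def by (rule bij_betw_the_inv_into)

lemma zpow_inv:
  assumes "bij_betw F X X" "x \<in> X"
  shows "zpow X (inv_on X F) n x = zpow X F (-n) x"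
proof -
  have "\<forall>y\<in>X. inv_on X F y = zpow X F (-1) y"
    using inv_on_zpow[OF assms(1), of _ 1] by simp
  then have "zpow X (inv_on X F) n x = zpow X (zpow X F (-1)) n x"
    using zpow_cong[OF bij_inv_on[OF assms(1)] zpow_bij[OF assms(1)] _ assms(2)] by blast
  then show ?thesis using zpow_mult[OF assms] by simp
qed




lemma conj_bij:
  assumes F: "bij_betw F X X"
    and hk: "\<forall>x\<in>X. h x \<in> Y \<and> k (h x) = x" "\<forall>y\<in>Y. k y \<in> X \<and> h (k y) = y"
    and G: "\<forall>y\<in>Y. G y = h (F (k y))"
  shows "bij_betw G Y Y"
  unfolding bij_betw_def
proof
  have Fi: "F x \<in> X" if "x \<in> X" for x using F that by (auto simp: bij_betw_def)
  show "inj_on G Y"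
  proof (rule inj_onI)
    fix u v assume uv: "u \<in> Y" "v \<in> Y" "G u = G v"
    have ku: "k u \<in> X" "k v \<in> X" using hk(2) uv by auto
    have "h (F (k u)) = h (F (k v))" using G uv by simp
    then have "k (h (F (k u))) = k (h (F (k v)))" by simp
    then have "F (k u) = F (k v)" using hk(1) Fi ku by simp
    then have "k u = k v" using F ku unfolding bij_betw_def inj_on_def by blast
    then have "h (k u) = h (k v)" by simp
    then show "u = v" using hk(2) uv by simp
  qed
  show "G ` Y = Y"
  proof
    show "G ` Y \<subseteq> Y"
    proof
      fix y assume "y \<in> G ` Y"
      then obtain u where u: "u \<in> Y" "y = G u" by blast
      have "k u \<in> X" using hk(2) u by auto
      then have "h (F (k u)) \<in> Y" using hk(1) Fi by blast
      then show "y \<in> Y" using G u by simp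
    qed
    show "Y \<subseteq> G ` Y"
    proof
      fix y assume y: "y \<in> Y"
      define w where "w = h (inv_on X F (k y))"
      have ky: "k y \<in> X" using hk(2) y by auto
      have i: "inv_on X F (k y) \<in> X" "F (inv_on X F (k y)) = k y" using inv_on_props[OF F ky] by auto
      have w: "w \<in> Y" using hk(1) i by (simp add: w_def)
      have "k w = inv_on X F (k y)" using hk(1) i by (simp add: w_def)
      then have "G w = y" using G w hk(2) y i by simp
      then show "y \<in> G ` Y" using w by blast
    qed
  qed
qed

lemma zpow_conj:
  assumes F: "bij_betw F X X"
    and hk: "\<forall>x\<in>X. h x \<in> Y \<and> k (h x) = x" "\<forall>y\<in>Y. k y \<in> X \<and> h (k y) = y"
    and G: "\<forall>y\<in>Y. G y = h (F (k y))"
    and x: "x \<in> X"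
  shows "zpow Y G n (h x) = h (zpow X F n x)"
proof (induction n rule: int_induct[where k=0])
  case base then show ?case by simp
next
  case (step1 i)
  have GB: "bij_betw G Y Y" by (rule conj_bij[OF F hk G])
  define z where "z = zpow X F i x"
  have z: "z \<in> X" using zpow_in[OF F x] by (simp add: z_def)
  have hz: "h z \<in> Y" "k (h z) = z" using hk(1) z by auto
  have "zpow Y G (i+1) (h x) = G (h z)"
    using zpow_succ[OF GB, of "h x" i] step1 hk(1) x by (simp add: z_def)
  also have "\<dots> = h (F z)" using G hz by simp
  also have "\<dots> = h (zpow X F (i+1) x)" using zpow_succ[OF F x, of i] by (simp add: z_def)
  finally show ?case .
next
  case (step2 i)
  have GB: "bij_betw G Y Y" by (rule conj_bij[OF F hk G])
  define z where "z = zpow X F i x"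
  have z: "z \<in> X" using zpow_in[OF F x] by (simp add: z_def)
  have iz: "inv_on X F z \<in> X" "F (inv_on X F z) = z" using inv_on_props[OF F z] by auto
  have hiz: "h (inv_on X F z) \<in> Y" "k (h (inv_on X F z)) = inv_on X F z" using hk(1) iz by auto
  have "inv_on Y G (h z) = h (inv_on X F z)"
    by (rule inv_on_eqI[OF GB hiz(1)]) (use G hiz iz in simp)
  moreover have "zpow Y G (i-1) (h x) = inv_on Y G (h z)"
    using zpow_pred[OF GB, of "h x" i] step2 hk(1) x by (simp add: z_def)
  moreover have "zpow X F (i-1) x = inv_on X F z"
    using zpow_pred[OF F x, of i] by (simp add: z_def)
  ultimately show ?case by simp
qed

lemma orbit_range: "orbit Z H z = range (\<lambda>n. zpow Z H n z)"
  unfolding orbit_def by auto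

lemma orbit_conj:
  assumes F: "bij_betw F X X"
    and hk: "\<forall>x\<in>X. h x \<in> Y \<and> k (h x) = x" "\<forall>y\<in>Y. k y \<in> X \<and> h (k y) = y"
    and G: "\<forall>y\<in>Y. G y = h (F (k y))"
    and x: "x \<in> X"
  shows "orbit Y G (h x) = h ` orbit X F x"
proof -
  have "\<And>n. zpow Y G n (h x) = h (zpow X F n x)" by (rule zpow_conj[OF F hk G x])
  then show ?thesis by (simp add: orbit_range image_image)
qed

lemma orbit_sub: "bij_betw F X X \<Longrightarrow> x \<in> X \<Longrightarrow> orbit X F x \<subseteq> X"
  unfolding orbit_range using zpow_in by (metis image_subsetI)

lemma exp_mono: "A \<subseteq> B \<Longrightarrow> expansive_on X d F B c \<Longrightarrow> expansive_on X d F A c"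
  unfolding expansive_on_def by (meson subsetD)

lemma exp_transfer:
  assumes F: "bij_betw F X X"
    and hk: "\<forall>x\<in>X. h x \<in> Y \<and> k (h x) = x" "\<forall>y\<in>Y. k y \<in> X \<and> h (k y) = y"
    and G: "\<forall>y\<in>Y. G y = h (F (k y))"
    and A: "A \<subseteq> X"
    and uc: "\<forall>u\<in>Y. \<forall>v\<in>Y. dY u v < \<delta> \<longrightarrow> dX (k u) (k v) < c"
    and c': "c' < \<delta>"
    and e: "expansive_on X dX F A c"
  shows "expansive_on Y dY G (h ` A) c'"
  unfolding expansive_on_def
proof (intro ballI impI)
  fix u v assume u: "u \<in> h ` A" and v: "v \<in> h ` A" and uv: "u \<noteq> v"
  obtain a b where ab: "a \<in> A" "b \<in> A" "u = h a" "v = h b" using u v by blast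
  then have "a \<noteq> b" using uv by blast
  then obtain n where n: "dX (zpow X F n a) (zpow X F n b) > c"
    using e ab unfolding expansive_on_def by blast
  have aX: "a \<in> X" "b \<in> X" using ab A by auto
  define p where "p = zpow X F n a"
  define q where "q = zpow X F n b"
  have pq: "p \<in> X" "q \<in> X" using zpow_in[OF F] aX by (auto simp: p_def q_def)
  have hpq: "h p \<in> Y" "h q \<in> Y" "k (h p) = p" "k (h q) = q" using hk(1) pq by auto
  have zz: "zpow Y G n u = h p" "zpow Y G n v = h q"
    using zpow_conj[OF F hk G] aX ab by (auto simp: p_def q_def)
  have "\<not> dY (h p) (h q) < \<delta>"
  proof
    assume "dY (h p) (h q) < \<delta>"
    then have "dX (k (h p)) (k (h q)) < c" using uc hpq(1,2) by blast
    then show False using n hpq by (simp add: p_def q_def)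
  qed
  then have "dY (zpow Y G n u) (zpow Y G n v) > c'" using c' zz by simp
  then show "\<exists>n. dY (zpow Y G n u) (zpow Y G n v) > c'" by blast
qed




lemma U_conj:
  assumes F: "bij_betw F X X"
    and hk: "\<forall>x\<in>X. h x \<in> Y \<and> k (h x) = x" "\<forall>y\<in>Y. k y \<in> X \<and> h (k y) = y"
    and G: "\<forall>y\<in>Y. G y = h (F (k y))"
    and uc: "\<forall>e>0. \<exists>\<delta>>0. \<forall>u\<in>Y. \<forall>v\<in>Y. dY u v < \<delta> \<longrightarrow> dX (k u) (k v) < e"
  shows "h ` unif_exp_points X dX F \<subseteq> unif_exp_points Y dY G"
proof
  fix y assume "y \<in> h ` unif_exp_points X dX F"
  then obtain x c where x: "x \<in> X" "y = h x" "c > 0" and e: "expansive_on X dX F (oball X dX x c) c"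
    unfolding unif_exp_points_def by blast
  obtain \<delta> where d: "\<delta> > 0" "\<forall>u\<in>Y. \<forall>v\<in>Y. dY u v < \<delta> \<longrightarrow> dX (k u) (k v) < c"
    using uc x(3) by blast
  define c' where "c' = \<delta>/2"
  have c': "c' > 0" "c' < \<delta>" using d by (auto simp: c'_def)
  have hx: "h x \<in> Y" "k (h x) = x" using hk(1) x(1) by auto
  have ex: "expansive_on Y dY G (h ` oball X dX x c) c'"
    by (rule exp_transfer[OF F hk G _ d(2) c'(2) e]) (auto simp: oball_def)
  have "oball Y dY y c' \<subseteq> h ` oball X dX x c"
  proof
    fix u assume "u \<in> oball Y dY y c'"
    then have u: "u \<in> Y" "dY (h x) u < \<delta>" using c' x(2) by (auto simp: oball_def)
    have ku: "k u \<in> X" "h (k u) = u" using hk(2) u(1) by auto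
    have "dX (k (h x)) (k u) < c" using d(2) hx(1) u by blast
    then have "dX x (k u) < c" using hx by simp
    then have "k u \<in> oball X dX x c" using ku by (auto simp: oball_def)
    then show "u \<in> h ` oball X dX x c" using ku by (metis image_eqI)
  qed
  then have "expansive_on Y dY G (oball Y dY y c') c'" using exp_mono ex by blast
  moreover have "y \<in> Y" using hx x(2) by simp
  ultimately show "y \<in> unif_exp_points Y dY G"
    unfolding unif_exp_points_def using c'(1) by blast
qed

lemma M_conj:
  assumes F: "bij_betw F X X"
    and hk: "\<forall>x\<in>X. h x \<in> Y \<and> k (h x) = x" "\<forall>y\<in>Y. k y \<in> X \<and> h (k y) = y"
    and G: "\<forall>y\<in>Y. G y = h (F (k y))"
    and uc: "\<forall>e>0. \<exists>\<delta>>0. \<forall>u\<in>Y. \<forall>v\<in>Y. dY u v < \<delta> \<longrightarrow> dX (k u) (k v) < e"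
    and cl: "\<forall>S. S \<subseteq> X \<longrightarrow> TY closure_of (h ` S) = h ` (TX closure_of S)"
    and clX: "\<forall>S. TX closure_of S \<subseteq> X"
  shows "h ` {x \<in> X. \<exists>c>0. \<forall>y \<in> oball X dX x c. expansive_on X dX F (TX closure_of orbit X F y) c}
     \<subseteq> {x \<in> Y. \<exists>c>0. \<forall>y \<in> oball Y dY x c. expansive_on Y dY G (TY closure_of orbit Y G y) c}"
proof
  fix y0 assume "y0 \<in> h ` {x \<in> X. \<exists>c>0. \<forall>y \<in> oball X dX x c. expansive_on X dX F (TX closure_of orbit X F y) c}"
  then obtain x c where x: "x \<in> X" "y0 = h x" "c > 0"
    and e: "\<forall>y \<in> oball X dX x c. expansive_on X dX F (TX closure_of orbit X F y) c"
    by blast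
  obtain \<delta> where d: "\<delta> > 0" "\<forall>u\<in>Y. \<forall>v\<in>Y. dY u v < \<delta> \<longrightarrow> dX (k u) (k v) < c"
    using uc x(3) by blast
  define c' where "c' = \<delta>/2"
  have c': "c' > 0" "c' < \<delta>" using d by (auto simp: c'_def)
  have hx: "h x \<in> Y" "k (h x) = x" using hk(1) x(1) by auto
  have "expansive_on Y dY G (TY closure_of orbit Y G u) c'" if "u \<in> oball Y dY y0 c'" for u
  proof -
    have u: "u \<in> Y" "dY (h x) u < \<delta>" using that c' x(2) by (auto simp: oball_def)
    have kuX: "k u \<in> X" "h (k u) = u" using hk(2) u(1) by auto
    have "dX (k (h x)) (k u) < c" using d(2) hx(1) u by blast
    then have "dX x (k u) < c" using hx by simp
    then have ku: "k u \<in> oball X dX x c" using kuX by (auto simp: oball_def)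
    have "orbit Y G u = h ` orbit X F (k u)"
      using orbit_conj[OF F hk G kuX(1)] kuX(2) by simp
    then have eq: "TY closure_of orbit Y G u = h ` (TX closure_of orbit X F (k u))"
      using cl orbit_sub[OF F kuX(1)] by simp
    have "expansive_on X dX F (TX closure_of orbit X F (k u)) c" using e ku by blast
    then show ?thesis unfolding eq
      by (rule exp_transfer[OF F hk G clX[rule_format] d(2) c'(2)])
  qed
  moreover have "y0 \<in> Y" using hx x(2) by simp
  ultimately show "y0 \<in> {x \<in> Y. \<exists>c>0. \<forall>y \<in> oball Y dY x c. expansive_on Y dY G (TY closure_of orbit Y G y) c}"
    using c'(1) by blast
qed




lemma zpow_prod:
  assumes f: "bij_betw f X X" and g: "bij_betw g Y Y" and a: "a \<in> X" and b: "b \<in> Y"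
  shows "zpow (X \<times> Y) (map_prod f g) n (a, b) = (zpow X f n a, zpow Y g n b)"
proof (induction n rule: int_induct[where k=0])
  case base then show ?case by simp
next
  case (step1 i)
  have B: "bij_betw (map_prod f g) (X \<times> Y) (X \<times> Y)" by (rule bij_betw_map_prod[OF f g])
  have ab: "(a, b) \<in> X \<times> Y" using a b by simp
  show ?case using zpow_succ[OF B ab, of i] step1 zpow_succ[OF f a, of i] zpow_succ[OF g b, of i] by simp
next
  case (step2 i)
  have B: "bij_betw (map_prod f g) (X \<times> Y) (X \<times> Y)" by (rule bij_betw_map_prod[OF f g])
  have ab: "(a, b) \<in> X \<times> Y" using a b by simp
  define p where "p = zpow X f i a"
  define q where "q = zpow Y g i b"
  have pq: "p \<in> X" "q \<in> Y" using zpow_in[OF f a] zpow_in[OF g b] by (auto simp: p_def q_def)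
  have "inv_on (X \<times> Y) (map_prod f g) (p, q) = (inv_on X f p, inv_on Y g q)"
    by (rule inv_on_eqI[OF B]) (use inv_on_props[OF f pq(1)] inv_on_props[OF g pq(2)] in auto)
  then show ?case using zpow_pred[OF B ab, of i] step2 zpow_pred[OF f a, of i] zpow_pred[OF g b, of i]
    by (simp add: p_def q_def)
qed

lemma U_prod:
  assumes MX: "Metric_space X dX" and MY: "Metric_space Y dY"
    and f: "bij_betw f X X" and g: "bij_betw g Y Y"
  shows "unif_exp_points (X \<times> Y) (max_dist dX dY) (map_prod f g) = unif_exp_points X dX f \<times> unif_exp_points Y dY g"
proof
  show "unif_exp_points (X \<times> Y) (max_dist dX dY) (map_prod f g) \<subseteq> unif_exp_points X dX f \<times> unif_exp_points Y dY g"
  proof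
    fix p assume "p \<in> unif_exp_points (X \<times> Y) (max_dist dX dY) (map_prod f g)"
    then obtain x y c where p: "p = (x, y)" "x \<in> X" "y \<in> Y" "c > 0"
      and e: "expansive_on (X \<times> Y) (max_dist dX dY) (map_prod f g) (oball (X \<times> Y) (max_dist dX dY) (x, y) c) c"
      unfolding unif_exp_points_def by auto
    have dx0: "dX x x = 0" using Metric_space.mdist_zero[OF MX p(2)] .
    have dy0: "dY y y = 0" using Metric_space.mdist_zero[OF MY p(3)] .
    have "expansive_on X dX f (oball X dX x c) c"
      unfolding expansive_on_def
    proof (intro ballI impI)
      fix a a' assume a: "a \<in> oball X dX x c" and a': "a' \<in> oball X dX x c" and ne: "a \<noteq> a'"
      have "(a, y) \<in> oball (X \<times> Y) (max_dist dX dY) (x, y) c" "(a', y) \<in> oball (X \<times> Y) (max_dist dX dY) (x, y) c"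
        using a a' p dy0 by (auto simp: oball_def max_dist_def)
      then obtain n where n: "max_dist dX dY (zpow (X \<times> Y) (map_prod f g) n (a, y)) (zpow (X \<times> Y) (map_prod f g) n (a', y)) > c"
        using e ne unfolding expansive_on_def by blast
      have aX: "a \<in> X" "a' \<in> X" using a a' by (auto simp: oball_def)
      have z: "zpow Y g n y \<in> Y" using zpow_in[OF g p(3)] .
      have "max_dist dX dY (zpow (X \<times> Y) (map_prod f g) n (a, y)) (zpow (X \<times> Y) (map_prod f g) n (a', y))
          = max (dX (zpow X f n a) (zpow X f n a')) 0"
        using zpow_prod[OF f g aX(1) p(3)] zpow_prod[OF f g aX(2) p(3)] Metric_space.mdist_zero[OF MY z]
        by (simp add: max_dist_def)
      then have "c < max (dX (zpow X f n a) (zpow X f n a')) 0" using n by linarith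
      then have "dX (zpow X f n a) (zpow X f n a') > c" using p(4) by (auto simp: max_def split: if_splits)
      then show "\<exists>n. dX (zpow X f n a) (zpow X f n a') > c" by blast
    qed
    moreover have "expansive_on Y dY g (oball Y dY y c) c"
      unfolding expansive_on_def
    proof (intro ballI impI)
      fix a a' assume a: "a \<in> oball Y dY y c" and a': "a' \<in> oball Y dY y c" and ne: "a \<noteq> a'"
      have "(x, a) \<in> oball (X \<times> Y) (max_dist dX dY) (x, y) c" "(x, a') \<in> oball (X \<times> Y) (max_dist dX dY) (x, y) c"
        using a a' p dx0 by (auto simp: oball_def max_dist_def)
      then obtain n where n: "max_dist dX dY (zpow (X \<times> Y) (map_prod f g) n (x, a)) (zpow (X \<times> Y) (map_prod f g) n (x, a')) > c"
        using e ne unfolding expansive_on_def by blast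
      have aY: "a \<in> Y" "a' \<in> Y" using a a' by (auto simp: oball_def)
      have z: "zpow X f n x \<in> X" using zpow_in[OF f p(2)] .
      have "max_dist dX dY (zpow (X \<times> Y) (map_prod f g) n (x, a)) (zpow (X \<times> Y) (map_prod f g) n (x, a'))
          = max 0 (dY (zpow Y g n a) (zpow Y g n a'))"
        using zpow_prod[OF f g p(2) aY(1)] zpow_prod[OF f g p(2) aY(2)] Metric_space.mdist_zero[OF MX z]
        by (simp add: max_dist_def)
      then have "c < max 0 (dY (zpow Y g n a) (zpow Y g n a'))" using n by linarith
      then have "dY (zpow Y g n a) (zpow Y g n a') > c" using p(4) by (auto simp: max_def split: if_splits)
      then show "\<exists>n. dY (zpow Y g n a) (zpow Y g n a') > c" by blast
    qed
    ultimately show "p \<in> unif_exp_points X dX f \<times> unif_exp_points Y dY g"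
      unfolding unif_exp_points_def using p by auto
  qed
next
  show "unif_exp_points X dX f \<times> unif_exp_points Y dY g \<subseteq> unif_exp_points (X \<times> Y) (max_dist dX dY) (map_prod f g)"
  proof
    fix p assume "p \<in> unif_exp_points X dX f \<times> unif_exp_points Y dY g"
    then obtain x y c1 c2 where p: "p = (x, y)" "x \<in> X" "y \<in> Y" "c1 > 0" "c2 > 0"
      and e1: "expansive_on X dX f (oball X dX x c1) c1"
      and e2: "expansive_on Y dY g (oball Y dY y c2) c2"
      unfolding unif_exp_points_def by auto
    define c where "c = min c1 c2"
    have c: "c > 0" "c \<le> c1" "c \<le> c2" using p by (auto simp: c_def)
    have "expansive_on (X \<times> Y) (max_dist dX dY) (map_prod f g) (oball (X \<times> Y) (max_dist dX dY) (x, y) c) c"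
      unfolding expansive_on_def
    proof (intro ballI impI)
      fix u v assume u: "u \<in> oball (X \<times> Y) (max_dist dX dY) (x, y) c"
        and v: "v \<in> oball (X \<times> Y) (max_dist dX dY) (x, y) c" and ne: "u \<noteq> v"
      obtain a b a' b' where uv: "u = (a, b)" "v = (a', b')" by (cases u, cases v) auto
      have m: "a \<in> X" "b \<in> Y" "a' \<in> X" "b' \<in> Y" using u v uv by (auto simp: oball_def)
      have o1: "a \<in> oball X dX x c1" "a' \<in> oball X dX x c1"
        using u v uv c m by (auto simp: oball_def max_dist_def)
      have o2: "b \<in> oball Y dY y c2" "b' \<in> oball Y dY y c2"
        using u v uv c m by (auto simp: oball_def max_dist_def)
      show "\<exists>n. max_dist dX dY (zpow (X \<times> Y) (map_prod f g) n u) (zpow (X \<times> Y) (map_prod f g) n v) > c"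
      proof (cases "a = a'")
        case False
        then obtain n where n: "dX (zpow X f n a) (zpow X f n a') > c1"
          using e1 o1 unfolding expansive_on_def by blast
        have "max_dist dX dY (zpow (X \<times> Y) (map_prod f g) n u) (zpow (X \<times> Y) (map_prod f g) n v) > c"
          using zpow_prod[OF f g m(1,2)] zpow_prod[OF f g m(3,4)] uv n c by (simp add: max_dist_def)
        then show ?thesis by blast
      next
        case True
        then have "b \<noteq> b'" using ne uv by auto
        then obtain n where n: "dY (zpow Y g n b) (zpow Y g n b') > c2"
          using e2 o2 unfolding expansive_on_def by blast
        have "max_dist dX dY (zpow (X \<times> Y) (map_prod f g) n u) (zpow (X \<times> Y) (map_prod f g) n v) > c"
          using zpow_prod[OF f g m(1,2)] zpow_prod[OF f g m(3,4)] uv n c by (simp add: max_dist_def)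
        then show ?thesis by blast
      qed
    qed
    then show "p \<in> unif_exp_points (X \<times> Y) (max_dist dX dY) (map_prod f g)"
      unfolding unif_exp_points_def using p c(1) by auto
  qed
qed

lemma exp_inv:
  assumes F: "bij_betw F X X" and A: "A \<subseteq> X"
  shows "expansive_on X d (inv_on X F) A c \<longleftrightarrow> expansive_on X d F A c"
proof -
  have "(\<exists>n. d (zpow X (inv_on X F) n x) (zpow X (inv_on X F) n y) > c) \<longleftrightarrow>
        (\<exists>n. d (zpow X F n x) (zpow X F n y) > c)" if "x \<in> A" "y \<in> A" for x y
  proof -
    have xy: "x \<in> X" "y \<in> X" using that A by auto
    show ?thesis
    proof
      assume "\<exists>n. d (zpow X (inv_on X F) n x) (zpow X (inv_on X F) n y) > c"
      then obtain n where "d (zpow X (inv_on X F) n x) (zpow X (inv_on X F) n y) > c" by blast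
      then have "d (zpow X F (-n) x) (zpow X F (-n) y) > c" using zpow_inv[OF F xy(1)] zpow_inv[OF F xy(2)] by simp
      then show "\<exists>n. d (zpow X F n x) (zpow X F n y) > c" by blast
    next
      assume "\<exists>n. d (zpow X F n x) (zpow X F n y) > c"
      then obtain n where "d (zpow X F n x) (zpow X F n y) > c" by blast
      then have "d (zpow X (inv_on X F) (-n) x) (zpow X (inv_on X F) (-n) y) > c"
        using zpow_inv[OF F xy(1), of "-n"] zpow_inv[OF F xy(2), of "-n"] by simp
      then show "\<exists>n. d (zpow X (inv_on X F) n x) (zpow X (inv_on X F) n y) > c" by blast
    qed
  qed
  then show ?thesis unfolding expansive_on_def by blast
qed

lemma U_inv:
  assumes F: "bij_betw F X X"
  shows "unif_exp_points X d (inv_on X F) = unif_exp_points X d F"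
proof -
  have "oball X d x c \<subseteq> X" for x c by (auto simp: oball_def)
  then show ?thesis unfolding unif_exp_points_def using exp_inv[OF F] by simp
qed

lemma orbit_inv:
  assumes F: "bij_betw F X X" and x: "x \<in> X"
  shows "orbit X (inv_on X F) x = orbit X F x"
proof -
  have "range (\<lambda>n. zpow X (inv_on X F) n x) = range (\<lambda>n. zpow X F (-n) x)"
    using zpow_inv[OF F x] by simp
  also have "\<dots> = range (\<lambda>n. zpow X F n x)"
  proof
    show "range (\<lambda>n. zpow X F (-n) x) \<subseteq> range (\<lambda>n. zpow X F n x)" by auto
    show "range (\<lambda>n. zpow X F n x) \<subseteq> range (\<lambda>n. zpow X F (-n) x)"
    proof
      fix z assume "z \<in> range (\<lambda>n. zpow X F n x)"
      then obtain n where "z = zpow X F n x" by blast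
      then have "z = zpow X F (-(-n)) x" by simp
      then show "z \<in> range (\<lambda>n. zpow X F (-n) x)" by blast
    qed
  qed
  finally show ?thesis by (simp add: orbit_range)
qed

lemma M_inv:
  assumes F: "bij_betw F X X" and MX: "Metric_space X d"
  shows "min_exp_points X d (inv_on X F) = min_exp_points X d F"
proof -
  have cl: "Metric_space.mtopology X d closure_of S \<subseteq> X" for S
    using closure_of_subset_topspace[of "Metric_space.mtopology X d" S] Metric_space.topspace_mtopology[OF MX]
    by simp
  have "expansive_on X d (inv_on X F) (Metric_space.mtopology X d closure_of orbit X (inv_on X F) y) c
      \<longleftrightarrow> expansive_on X d F (Metric_space.mtopology X d closure_of orbit X F y) c" if "y \<in> X" for y c
    using orbit_inv[OF F that] exp_inv[OF F cl] by simp
  then show ?thesis unfolding min_exp_points_def oball_def by auto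
qed




lemma ucont:
  assumes CX: "compact_metric_space X dX" and MY: "Metric_space Y dY"
    and k: "continuous_map (Metric_space.mtopology X dX) (Metric_space.mtopology Y dY) k"
  shows "\<forall>e>0. \<exists>\<delta>>0. \<forall>u\<in>X. \<forall>v\<in>X. dX u v < \<delta> \<longrightarrow> dY (k u) (k v) < e"
proof -
  have MX: "Metric_space X dX" using CX by (simp add: compact_metric_space_def)
  have "uniformly_continuous_map (metric (X, dX)) (metric (Y, dY)) k"
    by (rule continuous_imp_uniformly_continuous_map)
       (use CX k Metric_space.mtopology_of[OF MX] Metric_space.mtopology_of[OF MY] in
        \<open>simp add: compact_metric_space_def\<close>)
  then have "\<forall>e>0. \<exists>\<delta>>0. \<forall>x\<in>X. \<forall>y\<in>X. dX y x < \<delta> \<longrightarrow> dY (k y) (k x) < e"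
    unfolding uniformly_continuous_map_def
    using Metric_space.mspace_metric[OF MX] Metric_space.mdist_metric[OF MX] Metric_space.mdist_metric[OF MY]
    by simp
  then show ?thesis by blast
qed

lemma homeo_facts:
  assumes CX: "compact_metric_space X dX" and CY: "compact_metric_space Y dY"
    and h: "mhomeo X dX Y dY h"
  obtains k where "\<forall>x\<in>X. h x \<in> Y \<and> k (h x) = x" "\<forall>y\<in>Y. k y \<in> X \<and> h (k y) = y"
    "\<forall>e>0. \<exists>\<delta>>0. \<forall>u\<in>Y. \<forall>v\<in>Y. dY u v < \<delta> \<longrightarrow> dX (k u) (k v) < e"
    "\<forall>e>0. \<exists>\<delta>>0. \<forall>u\<in>X. \<forall>v\<in>X. dX u v < \<delta> \<longrightarrow> dY (h u) (h v) < e"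
    "\<forall>S. S \<subseteq> X \<longrightarrow> Metric_space.mtopology Y dY closure_of (h ` S) = h ` (Metric_space.mtopology X dX closure_of S)"
    "\<forall>S. S \<subseteq> Y \<longrightarrow> Metric_space.mtopology X dX closure_of (k ` S) = k ` (Metric_space.mtopology Y dY closure_of S)"
proof -
  have MX: "Metric_space X dX" using CX by (simp add: compact_metric_space_def)
  have MY: "Metric_space Y dY" using CY by (simp add: compact_metric_space_def)
  let ?TX = "Metric_space.mtopology X dX" and ?TY = "Metric_space.mtopology Y dY"
  have tX: "topspace ?TX = X" by (rule Metric_space.topspace_mtopology[OF MX])
  have tY: "topspace ?TY = Y" by (rule Metric_space.topspace_mtopology[OF MY])
  obtain k where hk: "homeomorphic_maps ?TX ?TY h k"
    using h unfolding mhomeo_def homeomorphic_map_maps by blast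
  then have H: "homeomorphic_map ?TX ?TY h" "homeomorphic_map ?TY ?TX k"
    "\<forall>x\<in>X. k (h x) = x" "\<forall>y\<in>Y. h (k y) = y"
    unfolding homeomorphic_maps_map tX tY by auto
  have im: "h ` X = Y" "k ` Y = X"
    using homeomorphic_imp_surjective_map[OF H(1)] homeomorphic_imp_surjective_map[OF H(2)] tX tY by auto
  show ?thesis
  proof
    show "\<forall>x\<in>X. h x \<in> Y \<and> k (h x) = x" using H(3) im by blast
    show "\<forall>y\<in>Y. k y \<in> X \<and> h (k y) = y" using H(4) im by blast
    show "\<forall>e>0. \<exists>\<delta>>0. \<forall>u\<in>Y. \<forall>v\<in>Y. dY u v < \<delta> \<longrightarrow> dX (k u) (k v) < e"
      by (rule ucont[OF CY MX homeomorphic_imp_continuous_map[OF H(2)]])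
    show "\<forall>e>0. \<exists>\<delta>>0. \<forall>u\<in>X. \<forall>v\<in>X. dX u v < \<delta> \<longrightarrow> dY (h u) (h v) < e"
      by (rule ucont[OF CX MY homeomorphic_imp_continuous_map[OF H(1)]])
    show "\<forall>S. S \<subseteq> X \<longrightarrow> ?TY closure_of (h ` S) = h ` (?TX closure_of S)"
      using homeomorphic_map_closure_of[OF H(1)] tX by simp
    show "\<forall>S. S \<subseteq> Y \<longrightarrow> ?TX closure_of (k ` S) = k ` (?TY closure_of S)"
      using homeomorphic_map_closure_of[OF H(2)] tY by simp
  qed
qed

lemma conj_full:
  assumes CX: "compact_metric_space X dX" and CY: "compact_metric_space Y dY"
    and F: "bij_betw F X X"
    and hk: "\<forall>x\<in>X. h x \<in> Y \<and> k (h x) = x" "\<forall>y\<in>Y. k y \<in> X \<and> h (k y) = y"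
    and G: "\<forall>y\<in>Y. G y = h (F (k y))"
    and ucK: "\<forall>e>0. \<exists>\<delta>>0. \<forall>u\<in>Y. \<forall>v\<in>Y. dY u v < \<delta> \<longrightarrow> dX (k u) (k v) < e"
    and ucH: "\<forall>e>0. \<exists>\<delta>>0. \<forall>u\<in>X. \<forall>v\<in>X. dX u v < \<delta> \<longrightarrow> dY (h u) (h v) < e"
    and clH: "\<forall>S. S \<subseteq> X \<longrightarrow> Metric_space.mtopology Y dY closure_of (h ` S) = h ` (Metric_space.mtopology X dX closure_of S)"
    and clK: "\<forall>S. S \<subseteq> Y \<longrightarrow> Metric_space.mtopology X dX closure_of (k ` S) = k ` (Metric_space.mtopology Y dY closure_of S)"
  shows "unif_exp_points Y dY G = h ` unif_exp_points X dX F \<and> min_exp_points Y dY G = h ` min_exp_points X dX F"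
proof -
  have MX: "Metric_space X dX" using CX by (simp add: compact_metric_space_def)
  have MY: "Metric_space Y dY" using CY by (simp add: compact_metric_space_def)
  have clX: "\<forall>S. Metric_space.mtopology X dX closure_of S \<subseteq> X"
    using closure_of_subset_topspace Metric_space.topspace_mtopology[OF MX] by metis
  have clY: "\<forall>S. Metric_space.mtopology Y dY closure_of S \<subseteq> Y"
    using closure_of_subset_topspace Metric_space.topspace_mtopology[OF MY] by metis
  have GB: "bij_betw G Y Y" by (rule conj_bij[OF F hk G])
  have F': "\<forall>x\<in>X. F x = k (G (h x))"
  proof
    fix x assume x: "x \<in> X"
    have hx: "h x \<in> Y" "k (h x) = x" using hk(1) x by auto
    have Fx: "F x \<in> X" using F x by (auto simp: bij_betw_def)
    have "G (h x) = h (F x)" using G hx by simp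
    then show "F x = k (G (h x))" using hk(1) Fx by simp
  qed
  have U1: "h ` unif_exp_points X dX F \<subseteq> unif_exp_points Y dY G"
    by (rule U_conj[OF F hk G ucK])
  have U2: "k ` unif_exp_points Y dY G \<subseteq> unif_exp_points X dX F"
    by (rule U_conj[OF GB hk(2) hk(1) F' ucH])
  have M1: "h ` min_exp_points X dX F \<subseteq> min_exp_points Y dY G"
    unfolding min_exp_points_def by (rule M_conj[OF F hk G ucK clH clX])
  have M2: "k ` min_exp_points Y dY G \<subseteq> min_exp_points X dX F"
    unfolding min_exp_points_def by (rule M_conj[OF GB hk(2) hk(1) F' ucH clK clY])
  have US: "unif_exp_points Y dY G \<subseteq> Y" by (auto simp: unif_exp_points_def)
  have MS: "min_exp_points Y dY G \<subseteq> Y" by (auto simp: min_exp_points_def)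
  have bk: "A \<subseteq> h ` B" if "A \<subseteq> Y" "k ` A \<subseteq> B" for A B
  proof
    fix y assume y: "y \<in> A"
    then have "y = h (k y)" "k y \<in> B" using that hk(2) by auto
    then show "y \<in> h ` B" by blast
  qed
  show ?thesis using U1 U2 M1 M2 bk[OF US U2] bk[OF MS M2] by blast
qed




lemma bij_from_hk:
  assumes "\<forall>x\<in>X. h x \<in> Y \<and> k (h x) = x" "\<forall>y\<in>Y. k y \<in> X \<and> h (k y) = y"
  shows "bij_betw h X Y"
  by (rule bij_betw_byWitness[where f'=k]) (use assms in \<open>auto simp del: \<close>)

lemma conj_pow:
  assumes fB: "bij_betw f X X"
    and hk: "\<forall>x\<in>X. f x \<in> X \<and> kf (f x) = x" "\<forall>y\<in>X. kf y \<in> X \<and> f (kf y) = y"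
  shows "\<forall>y\<in>X. zpow X f m y = f (zpow X f m (kf y))"
proof
  fix y assume y: "y \<in> X"
  have ky: "kf y \<in> X" "f (kf y) = y" using hk(2) y by auto
  have "inv_on X f y = kf y" by (rule inv_on_eqI[OF fB ky])
  moreover have "zpow X f (-1) = inv_on X f" by (simp add: zpow_def)
  ultimately have k1: "kf y = zpow X f (-1) y" by simp
  have "f (zpow X f m (kf y)) = zpow X f 1 (zpow X f m (zpow X f (-1) y))" using k1 by simp
  also have "\<dots> = zpow X f 1 (zpow X f (m + -1) y)" using zpow_add[OF fB y, of m "-1"] by simp
  also have "\<dots> = zpow X f (1 + (m + -1)) y" using zpow_add[OF fB y, of 1 "m + -1"] by simp
  finally show "zpow X f m y = f (zpow X f m (kf y))" by simp
qed

theorem proposition2p2: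
  fixes X :: "'a set" and dX :: "'a \<Rightarrow> 'a \<Rightarrow> real"
    and Y :: "'b set" and dY :: "'b \<Rightarrow> 'b \<Rightarrow> real"
    and f :: "'a \<Rightarrow> 'a" and g :: "'b \<Rightarrow> 'b" and h :: "'a \<Rightarrow> 'b"
  assumes "compact_metric_space X dX" and "compact_metric_space Y dY"
    and "mhomeo X dX X dX f" and "mhomeo Y dY Y dY g" and "mhomeo X dX Y dY h"
  shows "(unif_exp_points X dX f = unif_exp_points X dX (inv_on X f))
    \<and> (unif_exp_points Y dY (h \<circ> f \<circ> inv_on X h) = h ` unif_exp_points X dX f)
    \<and> (\<forall>k::int. f ` unif_exp_points X dX (zpow X f k) = unif_exp_points X dX (zpow X f k))
    \<and> (f ` unif_exp_points X dX f = unif_exp_points X dX f)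
    \<and> (unif_exp_points (X \<times> Y) (max_dist dX dY) (map_prod f g) = unif_exp_points X dX f \<times> unif_exp_points Y dY g)
    \<and> (min_exp_points X dX f = min_exp_points X dX (inv_on X f))
    \<and> (min_exp_points Y dY (h \<circ> f \<circ> inv_on X h) = h ` min_exp_points X dX f)
    \<and> (\<forall>k::int. f ` min_exp_points X dX (zpow X f k) = min_exp_points X dX (zpow X f k))
    \<and> (f ` min_exp_points X dX f = min_exp_points X dX f)"
proof -
  have MX: "Metric_space X dX" using assms(1) by (simp add: compact_metric_space_def)
  have MY: "Metric_space Y dY" using assms(2) by (simp add: compact_metric_space_def)
  obtain kh where kh: "\<forall>x\<in>X. h x \<in> Y \<and> kh (h x) = x" "\<forall>y\<in>Y. kh y \<in> X \<and> h (kh y) = y"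
    "\<forall>e>0. \<exists>\<delta>>0. \<forall>u\<in>Y. \<forall>v\<in>Y. dY u v < \<delta> \<longrightarrow> dX (kh u) (kh v) < e"
    "\<forall>e>0. \<exists>\<delta>>0. \<forall>u\<in>X. \<forall>v\<in>X. dX u v < \<delta> \<longrightarrow> dY (h u) (h v) < e"
    "\<forall>S. S \<subseteq> X \<longrightarrow> Metric_space.mtopology Y dY closure_of (h ` S) = h ` (Metric_space.mtopology X dX closure_of S)"
    "\<forall>S. S \<subseteq> Y \<longrightarrow> Metric_space.mtopology X dX closure_of (kh ` S) = kh ` (Metric_space.mtopology Y dY closure_of S)"
    by (rule homeo_facts[OF assms(1,2,5)])
  obtain kf where kf: "\<forall>x\<in>X. f x \<in> X \<and> kf (f x) = x" "\<forall>y\<in>X. kf y \<in> X \<and> f (kf y) = y"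
    "\<forall>e>0. \<exists>\<delta>>0. \<forall>u\<in>X. \<forall>v\<in>X. dX u v < \<delta> \<longrightarrow> dX (kf u) (kf v) < e"
    "\<forall>e>0. \<exists>\<delta>>0. \<forall>u\<in>X. \<forall>v\<in>X. dX u v < \<delta> \<longrightarrow> dX (f u) (f v) < e"
    "\<forall>S. S \<subseteq> X \<longrightarrow> Metric_space.mtopology X dX closure_of (f ` S) = f ` (Metric_space.mtopology X dX closure_of S)"
    "\<forall>S. S \<subseteq> X \<longrightarrow> Metric_space.mtopology X dX closure_of (kf ` S) = kf ` (Metric_space.mtopology X dX closure_of S)"
    by (rule homeo_facts[OF assms(1,1,3)])
  obtain kg where kg: "\<forall>x\<in>Y. g x \<in> Y \<and> kg (g x) = x" "\<forall>y\<in>Y. kg y \<in> Y \<and> g (kg y) = y"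
    "\<forall>e>0. \<exists>\<delta>>0. \<forall>u\<in>Y. \<forall>v\<in>Y. dY u v < \<delta> \<longrightarrow> dY (kg u) (kg v) < e"
    "\<forall>e>0. \<exists>\<delta>>0. \<forall>u\<in>Y. \<forall>v\<in>Y. dY u v < \<delta> \<longrightarrow> dY (g u) (g v) < e"
    "\<forall>S. S \<subseteq> Y \<longrightarrow> Metric_space.mtopology Y dY closure_of (g ` S) = g ` (Metric_space.mtopology Y dY closure_of S)"
    "\<forall>S. S \<subseteq> Y \<longrightarrow> Metric_space.mtopology Y dY closure_of (kg ` S) = kg ` (Metric_space.mtopology Y dY closure_of S)"
    by (rule homeo_facts[OF assms(2,2,4)])
  have fB: "bij_betw f X X" by (rule bij_from_hk[OF kf(1,2)])
  have gB: "bij_betw g Y Y" by (rule bij_from_hk[OF kg(1,2)])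
  have P1: "unif_exp_points X dX f = unif_exp_points X dX (inv_on X f)"
    using U_inv[OF fB] by simp
  have P6: "min_exp_points X dX f = min_exp_points X dX (inv_on X f)"
    using M_inv[OF fB MX] by simp
  have P5: "unif_exp_points (X \<times> Y) (max_dist dX dY) (map_prod f g) = unif_exp_points X dX f \<times> unif_exp_points Y dY g"
    by (rule U_prod[OF MX MY fB gB])
  have hinj: "inj_on h X" by (rule inj_on_inverseI[where g=kh]) (use kh(1) in simp)
  have Geq: "\<forall>y\<in>Y. (h \<circ> f \<circ> inv_on X h) y = h (f (kh y))"
  proof
    fix y assume y: "y \<in> Y"
    have "inv_on X h y = kh y" unfolding inv_on_def
      by (rule the_inv_into_f_eq[OF hinj]) (use kh(2) y in auto)
    then show "(h \<circ> f \<circ> inv_on X h) y = h (f (kh y))" by simp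
  qed
  have P27: "unif_exp_points Y dY (h \<circ> f \<circ> inv_on X h) = h ` unif_exp_points X dX f
      \<and> min_exp_points Y dY (h \<circ> f \<circ> inv_on X h) = h ` min_exp_points X dX f"
    by (rule conj_full[where F=f and G="h \<circ> f \<circ> inv_on X h" and h=h and k=kh,
          OF assms(1,2) fB kh(1,2) Geq kh(3,4,5,6)])
  have P38: "f ` unif_exp_points X dX (zpow X f m) = unif_exp_points X dX (zpow X f m)
      \<and> f ` min_exp_points X dX (zpow X f m) = min_exp_points X dX (zpow X f m)" for m
  proof -
    have "unif_exp_points X dX (zpow X f m) = f ` unif_exp_points X dX (zpow X f m)
      \<and> min_exp_points X dX (zpow X f m) = f ` min_exp_points X dX (zpow X f m)"
      by (rule conj_full[where F="zpow X f m" and G="zpow X f m" and h=f and k=kf,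
            OF assms(1,1) zpow_bij[OF fB] kf(1,2) conj_pow[OF fB kf(1,2), of m] kf(3,4,5,6)])
    then show ?thesis by (intro conjI) (rule sym, erule conjunct1, rule sym, erule conjunct2)
  qed
  have P4: "f ` unif_exp_points X dX f = unif_exp_points X dX f \<and> f ` min_exp_points X dX f = min_exp_points X dX f"
    using P38[of 1] unfolding zpow_1 .
  have P3: "\<forall>k::int. f ` unif_exp_points X dX (zpow X f k) = unif_exp_points X dX (zpow X f k)"
  proof
    fix k :: int
    from P38[of k] show "f ` unif_exp_points X dX (zpow X f k) = unif_exp_points X dX (zpow X f k)" by (rule conjunct1)
  qed
  have P8: "\<forall>k::int. f ` min_exp_points X dX (zpow X f k) = min_exp_points X dX (zpow X f k)"
  proof
    fix k :: int
    from P38[of k] show "f ` min_exp_points X dX (zpow X f k) = min_exp_points X dX (zpow X f k)" by (rule conjunct2)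
  qed
  note P2 = conjunct1[OF P27] and P7 = conjunct2[OF P27]
  note P4a = conjunct1[OF P4] and P4b = conjunct2[OF P4]
  show ?thesis
    by (intro conjI) (fact P1, fact P2, fact P3, fact P4a, fact P5, fact P6, fact P7, fact P8, fact P4b)
qed


end
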